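(* Let $G$ be a graph with vertices $a,b,c,d$, and let $H$ be any graph. There is perfect pair state transfer between $e_a-e_b$ and $e_c-e_d$ in $G$ if and only if there is perfect pair state transfer between $e_a-e_b$ and $e_c-e_d$ in the join of $G$ and $H$.
   Context: All graphs are finite and simple. The join of graphs $G_1,G_2$ has vertex set $V(G_1)\cup V(G_2)$ (disjoint) and edge set $E(G_1)\cup E(G_2)$ together with all edges having one end in $V(G_1)$ and the other in $V(G_2)$. For a graph $X$ with Laplacian $L=\Delta-A$ ($\Delta$ the degree matrix, $A$ the adjacency matrix), set $U(t)=\exp(itL)$. There is perfect pair state transfer between $e_a-e_b$ and $e_c-e_d$ in $X$ if there exist $t\ge 0$ and $\gamma\in\mathbb{C}$ with $|\gamma|=1$ such that $U(t)(e_a-e_b)=\gamma(e_c-e_d)$, where $e_v$ denotes the standard basis vector of vertex $v$. *)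

theory Defs
  imports Complex_Main
begin

definition simple_graph :: "'a set \<Rightarrow> ('a \<Rightarrow> 'a \<Rightarrow> bool) \<Rightarrow> bool" where
  "simple_graph V E \<longleftrightarrow> finite V \<and> (\<forall>x y. E x y \<longrightarrow> x \<in> V \<and> y \<in> V)
     \<and> (\<forall>x y. E x y \<longrightarrow> E y x) \<and> (\<forall>x. \<not> E x x)"

definition join_V :: "'a set \<Rightarrow> 'b set \<Rightarrow> ('a + 'b) set" where
  "join_V V1 V2 = Inl ` V1 \<union> Inr ` V2"

fun join_E :: "'a set \<Rightarrow> ('a \<Rightarrow> 'a \<Rightarrow> bool) \<Rightarrow> 'b set \<Rightarrow> ('b \<Rightarrow> 'b \<Rightarrow> bool)
     \<Rightarrow> ('a + 'b) \<Rightarrow> ('a + 'b) \<Rightarrow> bool" where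
  "join_E V1 E1 V2 E2 (Inl x) (Inl y) = E1 x y"
| "join_E V1 E1 V2 E2 (Inr x) (Inr y) = E2 x y"
| "join_E V1 E1 V2 E2 (Inl x) (Inr y) = (x \<in> V1 \<and> y \<in> V2)"
| "join_E V1 E1 V2 E2 (Inr x) (Inl y) = (x \<in> V2 \<and> y \<in> V1)"

text \<open>Vectors in C^V are functions 'a => complex (considered on V).
  Degree and Laplacian L = Delta - A acting on vectors.\<close>
definition degree :: "'a set \<Rightarrow> ('a \<Rightarrow> 'a \<Rightarrow> bool) \<Rightarrow> 'a \<Rightarrow> nat" where
  "degree V E x = card {y \<in> V. E x y}"

definition laplacian :: "'a set \<Rightarrow> ('a \<Rightarrow> 'a \<Rightarrow> bool) \<Rightarrow> ('a \<Rightarrow> complex) \<Rightarrow> ('a \<Rightarrow> complex)" where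
  "laplacian V E f = (\<lambda>x. if x \<in> V
      then of_nat (degree V E x) * f x - (\<Sum>y\<in>{y \<in> V. E x y}. f y) else 0)"

text \<open>U(t) = exp(itL), the matrix exponential given by its power series
  sum_k (itL)^k / k!, applied to a vector.\<close>
definition transition :: "'a set \<Rightarrow> ('a \<Rightarrow> 'a \<Rightarrow> bool) \<Rightarrow> real \<Rightarrow> ('a \<Rightarrow> complex) \<Rightarrow> ('a \<Rightarrow> complex)" where
  "transition V E t f = (\<lambda>x. \<Sum>k. ((\<i> * of_real t) ^ k / of_nat (fact k)) * ((laplacian V E ^^ k) f) x)"

definition std_basis :: "'a \<Rightarrow> 'a \<Rightarrow> complex" where
  "std_basis v = (\<lambda>x. if x = v then 1 else 0)"

definition pair_state :: "'a \<Rightarrow> 'a \<Rightarrow> 'a \<Rightarrow> complex" where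
  "pair_state a b = (\<lambda>x. std_basis a x - std_basis b x)"

definition pair_PST :: "'a set \<Rightarrow> ('a \<Rightarrow> 'a \<Rightarrow> bool) \<Rightarrow> 'a \<Rightarrow> 'a \<Rightarrow> 'a \<Rightarrow> 'a \<Rightarrow> bool" where
  "pair_PST V E a b c d \<longleftrightarrow> (\<exists>t::real. t \<ge> 0 \<and> (\<exists>\<gamma>::complex. cmod \<gamma> = 1 \<and>
      (\<forall>x\<in>V. transition V E t (pair_state a b) x = \<gamma> * pair_state c d x)))"

end

theory Submission
  imports Defs
begin

lemma lap_out: "x \<notin> V \<Longrightarrow> laplacian V E f x = 0"
  by (simp add: laplacian_def)

lemma lap_add: "laplacian V E (\<lambda>x. f x + h x) = (\<lambda>x. laplacian V E f x + laplacian V E h x)"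
  by (auto simp: laplacian_def sum.distrib algebra_simps)

lemma lap_scale: "laplacian V E (\<lambda>x. c * f x) = (\<lambda>x. c * laplacian V E f x)"
  by (auto simp: laplacian_def sum_distrib_left algebra_simps)

lemma lap_sum: "laplacian V E (\<lambda>x. \<Sum>j\<in>J. f j x) = (\<lambda>x. \<Sum>j\<in>J. laplacian V E (f j) x)"
  unfolding laplacian_def
  by (rule ext) (auto simp: sum_distrib_left sum_subtractf intro: sum.swap[where B=J])

lemma lap_sum_zero:
  assumes "simple_graph V E"
  shows "(\<Sum>x\<in>V. laplacian V E f x) = 0"
proof -
  have fin: "finite V" using assms by (simp add: simple_graph_def)
  have sym: "\<And>x y. E x y = E y x" using assms by (auto simp: simple_graph_def)
  have "(\<Sum>x\<in>V. \<Sum>y\<in>{y \<in> V. E x y}. f y) = (\<Sum>x\<in>V. \<Sum>y\<in>V. if E x y then f y else 0)"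
    using fin by (simp add: sum.inter_filter)
  also have "\<dots> = (\<Sum>y\<in>V. \<Sum>x\<in>V. if E x y then f y else 0)" by (rule sum.swap)
  also have "\<dots> = (\<Sum>y\<in>V. of_nat (degree V E y) * f y)"
  proof (rule sum.cong[OF refl])
    fix y assume "y \<in> V"
    have "(\<Sum>x\<in>V. if E x y then f y else 0) = (\<Sum>x\<in>{x\<in>V. E y x}. f y)"
      using fin by (simp add: sum.inter_filter[symmetric] sym)
    then show "(\<Sum>x\<in>V. if E x y then f y else 0) = of_nat (degree V E y) * f y"
      by (simp add: degree_def)
  qed
  finally show ?thesis by (simp add: laplacian_def sum_subtractf)
qed
lemma pascal_step:
  fixes A :: "nat \<Rightarrow> complex" and m :: complex
  shows "(\<Sum>j\<le>k. of_nat (k choose j) * m^(k-j) * A (Suc j)) + m * (\<Sum>j\<le>k. of_nat (k choose j) * m^(k-j) * A j)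
       = (\<Sum>j\<le>Suc k. of_nat (Suc k choose j) * m^(Suc k-j) * A j)"
proof -
  have R: "(\<Sum>j\<le>Suc k. of_nat (Suc k choose j) * m^(Suc k-j) * A j)
     = m^(Suc k) * A 0 + (\<Sum>j\<le>k. of_nat (k choose j) * m^(k-j) * A (Suc j))
        + (\<Sum>j\<le>k. of_nat (k choose Suc j) * m^(k-j) * A (Suc j))"
    apply (simp only: sum.atMost_Suc_shift)
    apply (simp add: sum.distrib[symmetric] algebra_simps del: sum.atMost_Suc)
    done
  have "m * (\<Sum>j\<le>k. of_nat (k choose j) * m^(k-j) * A j) = (\<Sum>j\<le>k. of_nat (k choose j) * m^(Suc k-j) * A j)"
    by (auto simp: sum_distrib_left Suc_diff_le intro!: sum.cong)
  also have "\<dots> = (\<Sum>j\<le>Suc k. of_nat (k choose j) * m^(Suc k-j) * A j)"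
    by simp
  also have "\<dots> = m^(Suc k) * A 0 + (\<Sum>j\<le>k. of_nat (k choose Suc j) * m^(k-j) * A (Suc j))"
    by (simp only: sum.atMost_Suc_shift) simp
  finally show ?thesis using R by simp
qed
definition lift :: "('a \<Rightarrow> complex) \<Rightarrow> ('a + 'b) \<Rightarrow> complex" where
  "lift g = (\<lambda>z. case z of Inl u \<Rightarrow> g u | Inr _ \<Rightarrow> 0)"

lemma join_lap:
  assumes G: "simple_graph VG EG" and H: "simple_graph VH EH"
    and out: "\<And>u. u \<notin> VG \<Longrightarrow> g u = 0" and s0: "sum g VG = 0"
  shows "laplacian (join_V VG VH) (join_E VG EG VH EH) (lift g :: 'a + 'b \<Rightarrow> complex)
       = lift (\<lambda>u. laplacian VG EG g u + of_nat (card VH) * g u)"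
proof (rule ext)
  fix z :: "'a + 'b"
  have finG: "finite VG" and finH: "finite VH" using G H by (auto simp: simple_graph_def)
  have EGV: "\<And>x y. EG x y \<Longrightarrow> y \<in> VG" using G by (auto simp: simple_graph_def)
  have EHV: "\<And>x y. EH x y \<Longrightarrow> y \<in> VH" using H by (auto simp: simple_graph_def)
  show "laplacian (join_V VG VH) (join_E VG EG VH EH) (lift g) z
       = lift (\<lambda>u. laplacian VG EG g u + of_nat (card VH) * g u) z"
  proof (cases z)
    case (Inl u)
    show ?thesis
    proof (cases "u \<in> VG")
      case True
      have S: "{y \<in> join_V VG VH. join_E VG EG VH EH (Inl u) y} = Inl ` {y\<in>VG. EG u y} \<union> Inr ` VH"
        using True by (auto simp: join_V_def elim!: join_E.elims)
      have D: "degree (join_V VG VH) (join_E VG EG VH EH) (Inl u) = degree VG EG u + card VH"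
        unfolding degree_def S using finG finH
        by (subst card_Un_disjoint) (auto simp: card_image)
      have Sm: "(\<Sum>y\<in>{y \<in> join_V VG VH. join_E VG EG VH EH (Inl u) y}. lift g y) = sum g {y\<in>VG. EG u y}"
        unfolding S using finG finH
        by (subst sum.union_disjoint) (auto simp: sum.reindex lift_def)
      have "Inl u \<in> join_V VG VH" using True by (simp add: join_V_def)
      then show ?thesis using True Inl
        by (simp add: laplacian_def D Sm del: join_E.simps) (simp add: lift_def algebra_simps)
    next
      case False
      then have "Inl u \<notin> join_V VG VH" by (auto simp: join_V_def)
      then show ?thesis using False Inl out by (simp add: laplacian_def lift_def)
    qed
  next
    case (Inr w)
    show ?thesis
    proof (cases "w \<in> VH")
      case True
      have S: "{y \<in> join_V VG VH. join_E VG EG VH EH (Inr w) y} = Inr ` {y\<in>VH. EH w y} \<union> Inl ` VG"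
        using True by (auto simp: join_V_def elim!: join_E.elims)
      have Sm: "(\<Sum>y\<in>{y \<in> join_V VG VH. join_E VG EG VH EH (Inr w) y}. lift g y) = sum g VG"
        unfolding S using finG finH
        by (subst sum.union_disjoint) (auto simp: sum.reindex lift_def)
      show ?thesis using True Inr s0
        by (simp add: laplacian_def Sm del: join_E.simps) (simp add: lift_def)
    next
      case False
      then have "Inr w \<notin> join_V VG VH" by (auto simp: join_V_def)
      then show ?thesis using False Inr by (simp add: laplacian_def lift_def)
    qed
  qed
qed
lemma N_binom:
  fixes m :: complex
  shows "((\<lambda>h u. laplacian V E h u + m * h u) ^^ k) g
     = (\<lambda>u. \<Sum>j\<le>k. of_nat (k choose j) * m^(k-j) * (laplacian V E ^^ j) g u)"
proof (induction k)
  case 0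
  then show ?case by simp
next
  case (Suc k)
  show ?case
  proof (rule ext)
    fix u
    have "((\<lambda>h u. laplacian V E h u + m * h u) ^^ Suc k) g u
      = laplacian V E (\<lambda>u. \<Sum>j\<le>k. of_nat (k choose j) * m^(k-j) * (laplacian V E ^^ j) g u) u
        + m * (\<Sum>j\<le>k. of_nat (k choose j) * m^(k-j) * (laplacian V E ^^ j) g u)"
      using Suc by simp
    also have "\<dots> = (\<Sum>j\<le>k. of_nat (k choose j) * m^(k-j) * (laplacian V E ^^ Suc j) g u)
        + m * (\<Sum>j\<le>k. of_nat (k choose j) * m^(k-j) * (laplacian V E ^^ j) g u)"
      by (simp add: lap_sum lap_scale)
    also have "\<dots> = (\<Sum>j\<le>Suc k. of_nat (Suc k choose j) * m^(Suc k-j) * (laplacian V E ^^ j) g u)"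
      by (rule pascal_step)
    finally show "((\<lambda>h u. laplacian V E h u + m * h u) ^^ Suc k) g u
      = (\<Sum>j\<le>Suc k. of_nat (Suc k choose j) * m^(Suc k-j) * (laplacian V E ^^ j) g u)" .
  qed
qed

lemma iter_lift:
  assumes G: "simple_graph VG EG" and H: "simple_graph VH EH"
    and out: "\<And>u. u \<notin> VG \<Longrightarrow> g u = 0" and s0: "sum g VG = 0"
  shows "(laplacian (join_V VG VH) (join_E VG EG VH EH) ^^ k) (lift g :: 'a + 'b \<Rightarrow> complex)
       = lift (((\<lambda>h u. laplacian VG EG h u + of_nat (card VH) * h u) ^^ k) g)
     \<and> (\<forall>u. u \<notin> VG \<longrightarrow> ((\<lambda>h u. laplacian VG EG h u + of_nat (card VH) * h u) ^^ k) g u = 0)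
     \<and> sum (((\<lambda>h u. laplacian VG EG h u + of_nat (card VH) * h u) ^^ k) g) VG = 0"
proof (induction k)
  case 0
  then show ?case using out s0 by simp
next
  case (Suc k)
  let ?N = "(\<lambda>h u. laplacian VG EG h u + of_nat (card VH) * h u)"
  let ?h = "(?N ^^ k) g"
  have o: "\<And>u. u \<notin> VG \<Longrightarrow> ?h u = 0" and s: "sum ?h VG = 0" using Suc by auto
  have "(laplacian (join_V VG VH) (join_E VG EG VH EH) ^^ Suc k) (lift g :: 'a + 'b \<Rightarrow> complex)
      = laplacian (join_V VG VH) (join_E VG EG VH EH) (lift ?h)"
    using Suc by simp
  also have "\<dots> = lift ((?N ^^ Suc k) g)"
    using join_lap[OF G H o s] by simp
  finally show ?case
    using o s lap_sum_zero[OF G, of ?h]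
    by (simp add: lap_out sum.distrib sum_distrib_left[symmetric])
qed
lemma lap_norm_pt:
  assumes G: "simple_graph V E" and v: "v \<in> V"
  shows "norm (laplacian V E h v) \<le> (real (card V) + 1) * (\<Sum>x\<in>V. norm (h x))"
proof -
  have fin: "finite V" using G by (simp add: simple_graph_def)
  have d: "degree V E v \<le> card V" unfolding degree_def using fin by (intro card_mono) auto
  have hv: "norm (h v) \<le> (\<Sum>x\<in>V. norm (h x))" using fin v by (intro member_le_sum) auto
  have "norm (of_nat (degree V E v) * h v) = real (degree V E v) * norm (h v)" by (simp add: norm_mult)
  also have "\<dots> \<le> real (card V) * (\<Sum>x\<in>V. norm (h x))"
    using d hv by (intro mult_mono) auto
  finally have 1: "norm (of_nat (degree V E v) * h v) \<le> real (card V) * (\<Sum>x\<in>V. norm (h x))" .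
  have "norm (\<Sum>y\<in>{y \<in> V. E v y}. h y) \<le> (\<Sum>y\<in>{y \<in> V. E v y}. norm (h y))" by (rule norm_sum)
  also have "\<dots> \<le> (\<Sum>x\<in>V. norm (h x))" using fin by (intro sum_mono2) auto
  finally have 2: "norm (\<Sum>y\<in>{y \<in> V. E v y}. h y) \<le> (\<Sum>x\<in>V. norm (h x))" .
  have "norm (laplacian V E h v) \<le> norm (of_nat (degree V E v) * h v) + norm (\<Sum>y\<in>{y \<in> V. E v y}. h y)"
    using v by (simp add: laplacian_def norm_triangle_ineq4)
  then show ?thesis using 1 2 by (simp add: algebra_simps)
qed

lemma lap_norm_sum:
  assumes G: "simple_graph V E"
  shows "(\<Sum>v\<in>V. norm (laplacian V E h v)) \<le> (real (card V) * (real (card V) + 1)) * (\<Sum>x\<in>V. norm (h x))"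
proof -
  have "(\<Sum>v\<in>V. norm (laplacian V E h v)) \<le> (\<Sum>v\<in>V. (real (card V) + 1) * (\<Sum>x\<in>V. norm (h x)))"
    using lap_norm_pt[OF G] by (intro sum_mono) auto
  then show ?thesis by simp
qed

lemma lap_iter_bound:
  assumes G: "simple_graph V E" and v: "v \<in> V"
  shows "norm ((laplacian V E ^^ j) g v) \<le> (real (card V) * (real (card V) + 1)) ^ j * (\<Sum>x\<in>V. norm (g x))"
proof -
  let ?K = "real (card V) * (real (card V) + 1)"
  have fin: "finite V" using G by (simp add: simple_graph_def)
  have S: "(\<Sum>x\<in>V. norm ((laplacian V E ^^ j) g x)) \<le> ?K ^ j * (\<Sum>x\<in>V. norm (g x))" for j
  proof (induction j)
    case 0 then show ?case by simp
  next
    case (Suc j)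
    have "(\<Sum>x\<in>V. norm ((laplacian V E ^^ Suc j) g x)) \<le> ?K * (\<Sum>x\<in>V. norm ((laplacian V E ^^ j) g x))"
      using lap_norm_sum[OF G] by simp
    also have "\<dots> \<le> ?K * (?K ^ j * (\<Sum>x\<in>V. norm (g x)))"
      using Suc by (intro mult_left_mono) auto
    finally show ?case by (simp add: algebra_simps)
  qed
  have "norm ((laplacian V E ^^ j) g v) \<le> (\<Sum>x\<in>V. norm ((laplacian V E ^^ j) g x))"
    using fin v by (intro member_le_sum) auto
  with S[of j] show ?thesis by linarith
qed

lemma trans_summable:
  assumes G: "simple_graph V E" and v: "v \<in> V"
  shows "summable (\<lambda>j. norm ((\<i> * of_real t) ^ j / of_nat (fact j) * (laplacian V E ^^ j) g v))"
proof -
  let ?K = "real (card V) * (real (card V) + 1)"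
  let ?S = "(\<Sum>x\<in>V. norm (g x))"
  have sm: "summable (\<lambda>j. ?S * ((\<bar>t\<bar> * ?K) ^ j /\<^sub>R fact j))"
    by (intro summable_mult summable_exp_generic)
  show ?thesis
  proof (rule summable_comparison_test[OF _ sm], intro exI allI impI)
    fix j :: nat
    have "norm (norm ((\<i> * of_real t) ^ j / of_nat (fact j) * (laplacian V E ^^ j) g v))
        = \<bar>t\<bar> ^ j / fact j * norm ((laplacian V E ^^ j) g v)"
      by (simp add: norm_mult norm_divide norm_power)
    also have "\<dots> \<le> \<bar>t\<bar> ^ j / fact j * (?K ^ j * ?S)"
      using lap_iter_bound[OF G v] by (intro mult_left_mono) auto
    also have "\<dots> = ?S * ((\<bar>t\<bar> * ?K) ^ j /\<^sub>R fact j)"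
      by (simp add: power_mult_distrib divide_inverse)
    finally show "norm (norm ((\<i> * of_real t) ^ j / of_nat (fact j) * (laplacian V E ^^ j) g v))
        \<le> ?S * ((\<bar>t\<bar> * ?K) ^ j /\<^sub>R fact j)" .
  qed
qed
lemma term_eq:
  fixes x m A :: complex
  assumes "j \<le> k"
  shows "x ^ k / of_nat (fact k) * (of_nat (k choose j) * m^(k-j) * A)
       = (x ^ j / of_nat (fact j) * A) * ((x * m) ^ (k - j) / of_nat (fact (k - j)))"
proof -
  have k: "k = j + (k - j)" using assms by simp
  have xk: "x ^ k = x ^ j * x ^ (k - j)" by (subst k, subst power_add) simp
  have "(of_nat (k choose j) :: complex) = fact k / (fact j * fact (k - j))"
    using binomial_fact[OF assms] by simp
  then show ?thesis
    by (simp add: xk power_mult_distrib field_simps)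
qed

lemma exp_series_c:
  fixes x :: complex
  shows "(\<Sum>n. x ^ n / of_nat (fact n)) = exp x"
proof -
  have "(\<lambda>n. x ^ n /\<^sub>R fact n) sums exp x" by (rule exp_converges)
  moreover have "(\<lambda>n. x ^ n /\<^sub>R fact n) = (\<lambda>n. x ^ n / of_nat (fact n))"
    by (simp add: scaleR_conv_of_real divide_inverse mult.commute)
  ultimately show ?thesis by (simp add: sums_iff)
qed

lemma exp_norm_summable:
  fixes x :: complex
  shows "summable (\<lambda>n. norm (x ^ n / of_nat (fact n)))"
proof -
  have e: "x ^ n /\<^sub>R fact n = x ^ n / of_nat (fact n)" for n
    by (simp add: scaleR_conv_of_real divide_inverse mult.commute)
  show ?thesis using summable_norm_exp[of x] by (simp only: e)
qed

lemma trans_join: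
  assumes G: "simple_graph VG EG" and H: "simple_graph VH EH"
    and out: "\<And>u. u \<notin> VG \<Longrightarrow> g u = 0" and s0: "sum g VG = 0" and u: "u \<in> VG"
  shows "transition (join_V VG VH) (join_E VG EG VH EH) t (lift g :: 'a + 'b \<Rightarrow> complex) (Inl u)
       = exp (\<i> * of_real t * of_nat (card VH)) * transition VG EG t g u"
proof -
  let ?m = "of_nat (card VH) :: complex"
  let ?x = "\<i> * of_real t :: complex"
  define a where "a j = ?x ^ j / of_nat (fact j) * (laplacian VG EG ^^ j) g u" for j
  define b where "b n = (?x * ?m) ^ n / of_nat (fact n)" for n
  have "transition (join_V VG VH) (join_E VG EG VH EH) t (lift g :: 'a + 'b \<Rightarrow> complex) (Inl u)
      = (\<Sum>k. ?x ^ k / of_nat (fact k) * (\<Sum>j\<le>k. of_nat (k choose j) * ?m^(k-j) * (laplacian VG EG ^^ j) g u))"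
    unfolding transition_def
    using iter_lift[OF G H out s0]
    by (simp add: N_binom lift_def)
  also have "\<dots> = (\<Sum>k. \<Sum>j\<le>k. a j * b (k - j))"
    unfolding sum_distrib_left a_def b_def
    by (intro suminf_cong sum.cong refl term_eq) simp
  also have "\<dots> = (\<Sum>k. a k) * (\<Sum>k. b k)"
    by (rule Cauchy_product[symmetric])
      (use trans_summable[OF G u] exp_norm_summable in \<open>simp_all add: a_def b_def\<close>)
  also have "(\<Sum>k. b k) = exp (?x * ?m)" unfolding b_def by (rule exp_series_c)
  finally show ?thesis by (simp add: transition_def a_def mult.commute)
qed
lemma lift_pair: "lift (pair_state a b) = pair_state (Inl a) (Inl b)"
  by (rule ext, case_tac x) (auto simp: lift_def pair_state_def std_basis_def)

lemma trans_Inr: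
  assumes G: "simple_graph VG EG" and H: "simple_graph VH EH"
    and out: "\<And>u. u \<notin> VG \<Longrightarrow> g u = 0" and s0: "sum g VG = 0"
  shows "transition (join_V VG VH) (join_E VG EG VH EH) t (lift g :: 'a + 'b \<Rightarrow> complex) (Inr w) = 0"
  unfolding transition_def
  using iter_lift[OF G H out s0]
  by (simp add: lift_def)

theorem mainTheorem2:
  fixes VG :: "'a set" and EG :: "'a \<Rightarrow> 'a \<Rightarrow> bool"
    and VH :: "'b set" and EH :: "'b \<Rightarrow> 'b \<Rightarrow> bool"
    and a b c d :: 'a
  assumes "simple_graph VG EG" and "simple_graph VH EH"
    and "a \<in> VG" "b \<in> VG" "c \<in> VG" "d \<in> VG"
  shows "pair_PST VG EG a b c d \<longleftrightarrow>
         pair_PST (join_V VG VH) (join_E VG EG VH EH) (Inl a) (Inl b) (Inl c) (Inl d)"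
proof -
  note G = assms(1) and H = assms(2)
  have fin: "finite VG" using G by (simp add: simple_graph_def)
  let ?g = "pair_state a b"
  have out: "\<And>u. u \<notin> VG \<Longrightarrow> ?g u = 0" using assms by (auto simp: pair_state_def std_basis_def)
  have s0: "sum ?g VG = 0" using assms fin
    by (simp add: pair_state_def std_basis_def sum_subtractf)
  define Ex where "Ex t = exp (\<i> * of_real t * of_nat (card VH) :: complex)" for t
  have nE: "norm (Ex t) = 1" for t
  proof -
    have "Ex t = exp (\<i> * of_real (t * real (card VH)))" by (simp add: Ex_def mult.assoc)
    then have "Ex t = cis (t * real (card VH))" by (simp add: cis_conv_exp)
    then show ?thesis by simp
  qed
  then have E0: "Ex t \<noteq> 0" for t by (metis norm_zero zero_neq_one)
  have TJ: "\<And>t u. u \<in> VG \<Longrightarrow> transition (join_V VG VH) (join_E VG EG VH EH) t (pair_state (Inl a) (Inl b) :: 'a + 'b \<Rightarrow> complex) (Inl u)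
       = Ex t * transition VG EG t ?g u"
    using trans_join[OF G H out s0] by (simp add: Ex_def lift_pair[symmetric])
  have TR: "\<And>t w. transition (join_V VG VH) (join_E VG EG VH EH) t (pair_state (Inl a) (Inl b) :: 'a + 'b \<Rightarrow> complex) (Inr w) = 0"
    by (simp add: lift_pair[symmetric] trans_Inr[OF G H out s0])
  have psI: "pair_state (Inl c) (Inl d) (Inl u :: 'a + 'b) = pair_state c d u" for u
    by (simp add: pair_state_def std_basis_def)
  have psR: "pair_state (Inl c) (Inl d) (Inr w :: 'a + 'b) = 0" for w
    by (simp add: pair_state_def std_basis_def)
  show ?thesis
  proof
    assume "pair_PST VG EG a b c d"
    then obtain t \<gamma> where t: "t \<ge> 0" and g1: "cmod \<gamma> = 1"
      and T: "\<And>x. x \<in> VG \<Longrightarrow> transition VG EG t ?g x = \<gamma> * pair_state c d x"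
      unfolding pair_PST_def by blast
    show "pair_PST (join_V VG VH) (join_E VG EG VH EH) (Inl a) (Inl b) (Inl c) (Inl d)"
      unfolding pair_PST_def
    proof (intro exI conjI ballI)
      show "t \<ge> 0" by (rule t)
      show "cmod (Ex t * \<gamma>) = 1" by (simp add: norm_mult nE g1)
      fix x assume "x \<in> join_V VG VH"
      then have "(\<exists>u\<in>VG. x = Inl u) \<or> (\<exists>w. x = Inr w)" by (auto simp: join_V_def)
      then show "transition (join_V VG VH) (join_E VG EG VH EH) t (pair_state (Inl a) (Inl b)) x
          = Ex t * \<gamma> * pair_state (Inl c) (Inl d) x"
        by (auto simp: TJ T TR psI psR)
    qed
  next
    assume "pair_PST (join_V VG VH) (join_E VG EG VH EH) (Inl a) (Inl b) (Inl c) (Inl d)"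
    then obtain t \<gamma> where t: "t \<ge> 0" and g1: "cmod \<gamma> = 1"
      and T: "\<And>x. x \<in> join_V VG VH \<Longrightarrow> transition (join_V VG VH) (join_E VG EG VH EH) t (pair_state (Inl a) (Inl b)) x
             = \<gamma> * pair_state (Inl c) (Inl d) x"
      unfolding pair_PST_def by blast
    show "pair_PST VG EG a b c d"
      unfolding pair_PST_def
    proof (intro exI conjI ballI)
      show "t \<ge> 0" by (rule t)
      show "cmod (\<gamma> / Ex t) = 1" by (simp add: norm_divide nE g1)
      fix x assume x: "x \<in> VG"
      then have "Inl x \<in> join_V VG VH" by (simp add: join_V_def)
      from T[OF this] TJ[OF x] psI[of x]
      have "Ex t * transition VG EG t ?g x = \<gamma> * pair_state c d x" by simp
      then show "transition VG EG t ?g x = \<gamma> / Ex t * pair_state c d x"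
        using E0[of t] by (simp add: field_simps)
    qed
  qed
qed

end
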